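(* Let $n$ be a nonnegative integer and let $a_j,b_j,c_j,d_j$ ($j=0,\dots,n$) be indeterminates (nonzero complex numbers). Then \begin{multline*} \sum_{k=0}^n \frac{b_k}{c_k}\, E(a_kb_k)E(a_k/b_k)E(c_kd_k)E(c_k/d_k) \prod_{j=0}^{k-1}E(a_jc_j)E(a_j/c_j)E(b_jd_j)E(b_j/d_j)\\ \times\prod_{j=k+1}^n E(a_jd_j)E(a_j/d_j)E(b_jc_j)E(b_j/c_j) \\ =\prod_{j=0}^n E(a_jc_j)E(a_j/c_j)E(b_jd_j)E(b_j/d_j) -\prod_{j=0}^n E(a_jd_j)E(a_j/d_j)E(b_jc_j)E(b_j/c_j). \end{multline*}
   Context: Let $p$ be a complex number with $|p|<1$. For nonzero $x$, $E(x)=E(x;p)=\prod_{k\ge 0}(1-xp^k)(1-p^{k+1}/x)$. Empty products equal $1$. *)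

theory Defs
  imports "HOL-Analysis.Analysis"
begin

definition E :: "complex \<Rightarrow> complex \<Rightarrow> complex" where
  "E p x = (\<Prod>k. (1 - x * p ^ k) * (1 - p ^ (k + 1) / x))"

end

theory Submission
  imports Defs "HOL-Complex_Analysis.Complex_Analysis"
begin


lemma abs_prod_lim:
  fixes f :: "nat \<Rightarrow> complex"
  assumes "summable (\<lambda>k. norm (f k - 1))"
  shows "convergent_prod f" "(\<lambda>N. \<Prod>k<N. f k) \<longlonglongrightarrow> prodinf f"
proof -
  show c: "convergent_prod f"
    using assms abs_convergent_prod_conv_summable abs_convergent_prod_imp_convergent_prod by blast
  have "(\<lambda>n. \<Prod>i\<le>n. f i) \<longlonglongrightarrow> prodinf f" by (rule convergent_prod_LIMSEQ[OF c])
  then show "(\<lambda>N. \<Prod>k<N. f k) \<longlonglongrightarrow> prodinf f"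
    using LIMSEQ_lessThan_iff_atMost by blast
qed

lemma prodinf_holo:
  fixes f :: "nat \<Rightarrow> complex \<Rightarrow> complex"
  assumes S: "open S" and holo: "\<And>k. f k holomorphic_on S"
    and bnd: "\<And>w0. w0 \<in> S \<Longrightarrow> \<exists>r>0. cball w0 r \<subseteq> S \<and> (\<exists>M. summable M \<and> (\<forall>k. \<forall>w\<in>cball w0 r. norm (f k w - 1) \<le> M k))"
  shows "(\<lambda>w. \<Prod>k. f k w) holomorphic_on S"
proof -
  have "(\<lambda>w. \<Prod>k. f k w) analytic_on S"
    unfolding analytic_on_def
  proof
    fix w0 assume w0S: "w0 \<in> S"
    obtain r M where r: "r>0" "cball w0 r \<subseteq> S" "summable M"
      and rM0: "\<forall>k. \<forall>w\<in>cball w0 r. norm (f k w - 1) \<le> M k"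
      using bnd[OF w0S] by (elim exE conjE) (rule that, assumption+)
    have rM: "norm (f k w - 1) \<le> M k" if "w \<in> cball w0 r" for k w
      using rM0 that by blast
    have uc: "uniformly_convergent_on (cball w0 r) (\<lambda>N x. \<Prod>n<N. f n x)"
    proof (rule uniformly_convergent_on_prod')
      show "continuous_on (cball w0 r) (f n)" for n
        using holo r(2) holomorphic_on_imp_continuous_on holomorphic_on_subset by blast
      show "compact (cball w0 r)" by simp
      show "uniformly_convergent_on (cball w0 r) (\<lambda>N x. \<Sum>n<N. norm (f n x - 1))"
        by (rule Weierstrass_m_test'[OF _ r(3)]) (use rM in auto)
    qed
    then obtain l where ul: "uniform_limit (cball w0 r) (\<lambda>N x. \<Prod>n<N. f n x) l sequentially"
      unfolding uniformly_convergent_on_def by blast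
    have leq: "l x = (\<Prod>k. f k x)" if x: "x \<in> cball w0 r" for x
    proof -
      have "summable (\<lambda>k. norm (f k x - 1))"
        by (rule summable_comparison_test'[OF r(3)]) (use rM x in auto)
      from abs_prod_lim(2)[OF this] have "(\<lambda>N. \<Prod>k<N. f k x) \<longlonglongrightarrow> (\<Prod>k. f k x)" .
      moreover have "(\<lambda>N. \<Prod>k<N. f k x) \<longlonglongrightarrow> l x"
        by (rule tendsto_uniform_limitI[OF ul x])
      ultimately show ?thesis using LIMSEQ_unique by blast
    qed
    have ul2: "uniform_limit (cball w0 r) (\<lambda>N x. \<Prod>n<N. f n x) (\<lambda>w. \<Prod>k. f k w) sequentially"
      using ul uniform_limit_cong'[of "cball w0 r" "\<lambda>N x. \<Prod>n<N. f n x" "\<lambda>N x. \<Prod>n<N. f n x" l "\<lambda>w. \<Prod>k. f k w"] leq by simp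
    have "(\<lambda>w. \<Prod>k. f k w) holomorphic_on ball w0 r"
    proof (rule holomorphic_uniform_limit[OF _ ul2])
      show "\<forall>\<^sub>F n in sequentially. continuous_on (cball w0 r) (\<lambda>x. \<Prod>n<n. f n x) \<and> (\<lambda>x. \<Prod>n<n. f n x) holomorphic_on ball w0 r"
      proof (intro always_eventually allI conjI)
        fix n
        have h: "(\<lambda>x. \<Prod>n<n. f n x) holomorphic_on S"
          by (intro holomorphic_on_prod) (use holo in auto)
        show "continuous_on (cball w0 r) (\<lambda>x. \<Prod>n<n. f n x)"
          using h r(2) holomorphic_on_imp_continuous_on holomorphic_on_subset by blast
        show "(\<lambda>x. \<Prod>n<n. f n x) holomorphic_on ball w0 r"
          using h r(2) ball_subset_cball holomorphic_on_subset by blast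
      qed
    qed auto
    then show "\<exists>e>0. (\<lambda>w. \<Prod>k. f k w) holomorphic_on ball w0 e" using r(1) by blast
  qed
  then show ?thesis using S analytic_on_open by blast
qed


lemma fac_bound:
  fixes p w :: complex
  assumes p: "norm p < 1" and w: "w \<noteq> 0"
  shows "norm ((1 - w*p^k)*(1 - p^(k+1)/w) - 1) \<le> norm p ^ k * (norm w + 1/norm w + 1)"
proof -
  have e: "(1 - w*p^k)*(1 - p^(k+1)/w) - 1 = - (w*p^k) - p^(k+1)/w + p^k * p^(k+1)"
    using w by (simp add: field_simps power_add)
  have t: "norm ((1 - w*p^k)*(1 - p^(k+1)/w) - 1) \<le> norm (w*p^k) + norm (p^(k+1)/w) + norm (p^k * p^(k+1))"
    unfolding e by (smt (verit) norm_minus_cancel norm_triangle_ineq4 norm_triangle_ineq)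
  have b1: "norm (w*p^k) = norm w * norm p ^ k" by (simp add: norm_mult norm_power)
  have b2: "norm (p^(k+1)/w) \<le> norm p ^ k / norm w"
  proof -
    have "norm p ^ (k+1) \<le> norm p ^ k" using p by (simp add: mult_left_le_one_le)
    then show ?thesis by (simp add: norm_divide norm_power divide_right_mono del: power_Suc)
  qed
  have b3: "norm (p^k * p^(k+1)) \<le> norm p ^ k"
  proof -
    have "norm p ^ (k+1) \<le> 1" by (rule power_le_one) (use p in auto)
    then have "norm p ^ k * norm p ^ (k+1) \<le> norm p ^ k * 1" by (intro mult_left_mono) auto
    then show ?thesis by (simp add: norm_mult norm_power del: power_Suc)
  qed
  have eq: "norm w * norm p ^ k + norm p ^ k / norm w + norm p ^ k = norm p ^ k * (norm w + 1/norm w + 1)"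
    by (simp add: field_simps)
  show ?thesis using t b1 b2 b3 eq by linarith
qed

lemma prodinf_holo_E:
  fixes p :: complex and f :: "nat \<Rightarrow> complex \<Rightarrow> complex"
  assumes p: "norm p < 1"
    and bd: "\<And>k w. w \<noteq> 0 \<Longrightarrow> norm (f k w - 1) \<le> norm p ^ k * (norm w + 1/norm w + 1)"
    and holo: "\<And>k. f k holomorphic_on -{0}"
  shows "(\<lambda>w. \<Prod>k. f k w) holomorphic_on -{0}"
proof (rule prodinf_holo[OF _ holo])
  show "open (- {0::complex})" by auto
  fix w0 :: complex assume "w0 \<in> -{0}"
  hence w0: "w0 \<noteq> 0" by auto
  define r where "r = norm w0 / 2"
  have r: "r > 0" using w0 by (simp add: r_def)
  have lo: "norm w \<ge> r" and hi: "norm w \<le> 3 * r" if "w \<in> cball w0 r" for w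
  proof -
    have "dist w0 w \<le> r" using that by simp
    hence "norm (w0 - w) \<le> r" by (simp add: dist_norm)
    moreover have "norm w0 \<le> norm w + norm (w0 - w)" and "norm w \<le> norm w0 + norm (w0 - w)"
      using norm_triangle_ineq2[of w0 w] norm_triangle_ineq2[of w w0] by (auto simp: norm_minus_commute)
    ultimately show "norm w \<ge> r" "norm w \<le> 3 * r" by (auto simp: r_def)
  qed
  have sub: "cball w0 r \<subseteq> -{0}"
  proof
    fix w assume "w \<in> cball w0 r"
    then have "r \<le> norm w" by (rule lo)
    with r show "w \<in> -{0}" by auto
  qed
  define M where "M k = norm p ^ k * (3 * r + 1 / r + 1)" for k
  have sM: "summable M" unfolding M_def
    by (intro summable_mult2 summable_geometric) (use p in auto)
  have "\<forall>k. \<forall>w\<in>cball w0 r. norm (f k w - 1) \<le> M k"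
  proof (intro allI ballI)
    fix k w assume wc: "w \<in> cball w0 r"
    have wn: "w \<noteq> 0" using wc sub by auto
    have "1 / norm w \<le> 1 / r" using lo[OF wc] r by (simp add: frac_le)
    hence "norm w + 1/norm w + 1 \<le> 3 * r + 1 / r + 1" using hi[OF wc] by simp
    hence "norm p ^ k * (norm w + 1/norm w + 1) \<le> M k"
      unfolding M_def by (intro mult_left_mono) auto
    then show "norm (f k w - 1) \<le> M k" using bd[OF wn, of k] by linarith
  qed
  then show "\<exists>r>0. cball w0 r \<subseteq> - {0} \<and> (\<exists>M. summable M \<and> (\<forall>k. \<forall>w\<in>cball w0 r. norm (f k w - 1) \<le> M k))"
    using r sub sM by blast
qed

lemma E_summable:
  fixes p w :: complex
  assumes p: "norm p < 1" and w: "w \<noteq> 0"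
  shows "summable (\<lambda>k. norm ((1 - w*p^k)*(1 - p^(k+1)/w) - 1))"
proof (rule summable_comparison_test'[where g="\<lambda>k. norm p ^ k * (norm w + 1/norm w + 1)"])
  show "summable (\<lambda>k. norm p ^ k * (norm w + 1/norm w + 1))"
    by (intro summable_mult2 summable_geometric) (use p in auto)
  show "norm (norm ((1 - w*p^k)*(1 - p^(k+1)/w) - 1)) \<le> norm p ^ k * (norm w + 1/norm w + 1)" for k
    using fac_bound[OF p w] by simp
qed

lemma E_lim:
  fixes p w :: complex
  assumes p: "norm p < 1" and w: "w \<noteq> 0"
  shows "(\<lambda>N. \<Prod>k<N. (1 - w*p^k)*(1 - p^(k+1)/w)) \<longlonglongrightarrow> E p w"
  unfolding E_def using abs_prod_lim(2)[OF E_summable[OF p w]] .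

lemma E_conv:
  fixes p w :: complex
  assumes p: "norm p < 1" and w: "w \<noteq> 0"
  shows "convergent_prod (\<lambda>k. (1 - w*p^k)*(1 - p^(k+1)/w))"
  using abs_prod_lim(1)[OF E_summable[OF p w]] .

lemma E_holo:
  fixes p :: complex
  assumes p: "norm p < 1"
  shows "E p holomorphic_on -{0}"
proof -
  have "(\<lambda>w. \<Prod>k. (1 - w*p^k)*(1 - p^(k+1)/w)) holomorphic_on -{0}"
    by (rule prodinf_holo_E[OF p fac_bound[OF p]]) (auto intro!: holomorphic_intros)
  moreover have "E p = (\<lambda>w. \<Prod>k. (1 - w*p^k)*(1 - p^(k+1)/w))" by (rule ext) (simp add: E_def)
  ultimately show ?thesis by simp
qed


lemma prodinf_zero_factor:
  fixes f :: "nat \<Rightarrow> complex"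
  assumes "convergent_prod f" "f i = 0"
  shows "prodinf f = 0"
  using has_prod_zeroI[OF convergent_prod_has_prod[OF assms(1)] assms(2)] .

lemma E_one:
  fixes p :: complex
  assumes p: "norm p < 1"
  shows "E p 1 = 0"
  unfolding E_def by (rule prodinf_zero_factor[OF E_conv[OF p], of 1 0]) auto

lemma fin_shift:
  fixes p x :: complex
  assumes p: "p \<noteq> 0" and x: "x \<noteq> 0"
  shows "(\<Prod>k<N. (1 - (p*x)*p^k)*(1 - p^(k+1)/(p*x))) * ((1-x)*(1 - p^N/x))
       = (\<Prod>k<N. (1 - x*p^k)*(1 - p^(k+1)/x)) * ((1 - 1/x)*(1 - x*p^N))"
proof (induction N)
  case 0
  then show ?case by simp
next
  case (Suc N)
  define A where "A = (\<Prod>k<N. (1 - (p*x)*p^k)*(1 - p^(k+1)/(p*x)))"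
  define B where "B = (\<Prod>k<N. (1 - x*p^k)*(1 - p^(k+1)/x))"
  have IH: "A * ((1-x)*(1 - p^N/x)) = B * ((1 - 1/x)*(1 - x*p^N))"
    using Suc.IH unfolding A_def B_def .
  have r1: "p^(N+1)/(p*x) = p^N/x" using p x by (simp add: field_simps)
  have r2: "p*x*p^N = x*p^(Suc N)" by simp
  have "(\<Prod>k<Suc N. (1 - (p*x)*p^k)*(1 - p^(k+1)/(p*x))) * ((1-x)*(1 - p^(Suc N)/x))
      = (A * ((1-x)*(1 - p^N/x))) * ((1 - x*p^(Suc N))*(1 - p^(Suc N)/x))"
    unfolding prod.lessThan_Suc A_def[symmetric] r1 r2 by (simp only: ac_simps)
  also have "\<dots> = (B * ((1 - 1/x)*(1 - x*p^N))) * ((1 - x*p^(Suc N))*(1 - p^(Suc N)/x))"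
    by (simp only: IH)
  also have "\<dots> = (\<Prod>k<Suc N. (1 - x*p^k)*(1 - p^(k+1)/x)) * ((1 - 1/x)*(1 - x*p^(Suc N)))"
    unfolding prod.lessThan_Suc B_def[symmetric] by (simp only: ac_simps Suc_eq_plus1)
  finally show ?case .
qed

lemma fin_refl:
  fixes p x :: complex
  assumes x: "x \<noteq> 0"
  shows "(\<Prod>k<N. (1 - (1/x)*p^k)*(1 - p^(k+1)/(1/x))) * ((1-x)*(1 - p^N/x))
       = (\<Prod>k<N. (1 - x*p^k)*(1 - p^(k+1)/x)) * ((1 - 1/x)*(1 - x*p^N))"
proof (induction N)
  case 0
  then show ?case by simp
next
  case (Suc N)
  define A where "A = (\<Prod>k<N. (1 - (1/x)*p^k)*(1 - p^(k+1)/(1/x)))"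
  define B where "B = (\<Prod>k<N. (1 - x*p^k)*(1 - p^(k+1)/x))"
  have IH: "A * ((1-x)*(1 - p^N/x)) = B * ((1 - 1/x)*(1 - x*p^N))"
    using Suc.IH unfolding A_def B_def .
  have r1: "p^(N+1)/(1/x) = x*p^(Suc N)" by simp
  have r2: "1/x*p^N = p^N/x" by simp
  have "(\<Prod>k<Suc N. (1 - (1/x)*p^k)*(1 - p^(k+1)/(1/x))) * ((1-x)*(1 - p^(Suc N)/x))
      = (A * ((1-x)*(1 - p^N/x))) * ((1 - x*p^(Suc N))*(1 - p^(Suc N)/x))"
    unfolding prod.lessThan_Suc A_def[symmetric] r1 r2 by (simp only: ac_simps)
  also have "\<dots> = (B * ((1 - 1/x)*(1 - x*p^N))) * ((1 - x*p^(Suc N))*(1 - p^(Suc N)/x))"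
    by (simp only: IH)
  also have "\<dots> = (\<Prod>k<Suc N. (1 - x*p^k)*(1 - p^(k+1)/x)) * ((1 - 1/x)*(1 - x*p^(Suc N)))"
    unfolding prod.lessThan_Suc B_def[symmetric] by (simp only: ac_simps Suc_eq_plus1)
  finally show ?case .
qed

lemma E_shift:
  fixes p x :: complex
  assumes p: "norm p < 1" "p \<noteq> 0" and x: "x \<noteq> 0"
  shows "E p (p*x) * x = - E p x"
proof (cases "x = 1")
  case True
  have "E p p = 0"
    unfolding E_def by (rule prodinf_zero_factor[OF E_conv[OF p(1)], of p 0]) (use p in auto)
  then show ?thesis using True E_one[OF p(1)] by simp
next
  case False
  have px: "p*x \<noteq> 0" using p x by simp
  have pN: "(\<lambda>N. p^N) \<longlonglongrightarrow> 0" using p(1) by (simp add: LIMSEQ_power_zero)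
  have l1: "(\<lambda>N. (\<Prod>k<N. (1 - (p*x)*p^k)*(1 - p^(k+1)/(p*x))) * ((1-x)*(1 - p^N/x)))
      \<longlonglongrightarrow> E p (p*x) * ((1-x)*(1 - 0/x))"
    by (intro tendsto_intros E_lim[OF p(1) px] pN) (use p x in auto)
  have l2: "(\<lambda>N. (\<Prod>k<N. (1 - x*p^k)*(1 - p^(k+1)/x)) * ((1 - 1/x)*(1 - x*p^N)))
      \<longlonglongrightarrow> E p x * ((1 - 1/x)*(1 - x*0))"
    by (intro tendsto_intros E_lim[OF p(1) x] pN) (use p x in auto)
  have "E p (p*x) * ((1-x)*(1 - 0/x)) = E p x * ((1 - 1/x)*(1 - x*0))"
    using LIMSEQ_unique[OF l1] l2 fin_shift[OF p(2) x] by simp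
  then have "E p (p*x) * (1-x) = E p x * (1 - 1/x)" by simp
  then have h: "E p (p*x) * (1-x) * x = E p x * ((1 - 1/x) * x)" by (simp add: mult.assoc)
  have "(1 - 1/x)*x = x - 1" using x by (simp add: field_simps)
  with h have "E p (p*x) * (1-x) * x = E p x * (x - 1)" by simp
  moreover have "(E p (p*x) * x + E p x) * (1 - x) = E p (p*x) * (1-x) * x - E p x * (x - 1)"
    by (simp add: algebra_simps)
  ultimately have "(E p (p*x) * x + E p x) * (1 - x) = 0" by simp
  then show ?thesis using False by (simp add: add_eq_0_iff)
qed

lemma E_refl:
  fixes p x :: complex
  assumes p: "norm p < 1" and x: "x \<noteq> 0"
  shows "E p (1/x) * x = - E p x"
proof (cases "x = 1")
  case True
  then show ?thesis using E_one[OF p(1)] by simp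
next
  case False
  have px: "1/x \<noteq> 0" using x by simp
  have pN: "(\<lambda>N. p^N) \<longlonglongrightarrow> 0" using p(1) by (simp add: LIMSEQ_power_zero)
  have l1: "(\<lambda>N. (\<Prod>k<N. (1 - (1/x)*p^k)*(1 - p^(k+1)/(1/x))) * ((1-x)*(1 - p^N/x)))
      \<longlonglongrightarrow> E p (1/x) * ((1-x)*(1 - 0/x))"
    by (intro tendsto_intros E_lim[OF p(1) px] pN) (use p x in auto)
  have l2: "(\<lambda>N. (\<Prod>k<N. (1 - x*p^k)*(1 - p^(k+1)/x)) * ((1 - 1/x)*(1 - x*p^N)))
      \<longlonglongrightarrow> E p x * ((1 - 1/x)*(1 - x*0))"
    by (intro tendsto_intros E_lim[OF p(1) x] pN) (use p x in auto)
  have "E p (1/x) * ((1-x)*(1 - 0/x)) = E p x * ((1 - 1/x)*(1 - x*0))"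
    using LIMSEQ_unique[OF l1] l2 fin_refl[OF x] by simp
  then have "E p (1/x) * (1-x) = E p x * (1 - 1/x)" by simp
  then have h: "E p (1/x) * (1-x) * x = E p x * ((1 - 1/x) * x)" by (simp add: mult.assoc)
  have "(1 - 1/x)*x = x - 1" using x by (simp add: field_simps)
  with h have "E p (1/x) * (1-x) * x = E p x * (x - 1)" by simp
  moreover have "(E p (1/x) * x + E p x) * (1 - x) = E p (1/x) * (1-x) * x - E p x * (x - 1)"
    by (simp add: algebra_simps)
  ultimately have "(E p (1/x) * x + E p x) * (1 - x) = 0" by simp
  then show ?thesis using False by (simp add: add_eq_0_iff)
qed


lemma holo_comp:
  fixes f g :: "complex \<Rightarrow> complex"
  assumes "f holomorphic_on -{0}" "g holomorphic_on -{0}" "\<And>w. w \<noteq> 0 \<Longrightarrow> g w \<noteq> 0"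
  shows "(\<lambda>w. f (g w)) holomorphic_on -{0}"
proof -
  have "g ` (-{0}) \<subseteq> -{0}"
  proof (rule image_subsetI)
    fix w :: complex assume "w \<in> -{0}"
    then have "w \<noteq> 0" by simp
    then have "g w \<noteq> 0" by (rule assms(3))
    then show "g w \<in> -{0}" by simp
  qed
  from holomorphic_on_compose_gen[OF assms(2,1) this] show ?thesis by (simp add: o_def)
qed

lemma E_zero:
  fixes p x :: complex
  assumes p: "norm p < 1" "p \<noteq> 0" and x: "x \<noteq> 0" and z: "E p x = 0"
  shows "\<exists>m::int. x = p powi m"
proof -
  have "(\<lambda>k. (1 - x*p^k)*(1 - p^(k+1)/x)) has_prod E p x"
    unfolding E_def by (rule convergent_prod_has_prod[OF E_conv[OF p(1) x]])
  with z have "0 \<in> range (\<lambda>k. (1 - x*p^k)*(1 - p^(k+1)/x))"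
    using has_prod_eq_0_iff by metis
  then obtain k where "(1 - x*p^k)*(1 - p^(k+1)/x) = 0" by auto
  then have "x*p^k = 1 \<or> p^(k+1)/x = 1" by auto
  then show ?thesis
  proof
    assume "x*p^k = 1"
    then have "x = p powi (- int k)" using p by (simp add: power_int_minus field_simps)
    then show ?thesis by blast
  next
    assume "p^(k+1)/x = 1"
    then have "x = p^(k+1)" using x by (simp add: field_simps)
    then have "x = p powi (int (k+1))" by (simp only: power_int_of_nat)
    then show ?thesis by blast
  qed
qed

definition R :: "complex \<Rightarrow> complex \<Rightarrow> complex" where
  "R p w = (\<Prod>k. (if k = 0 then 1 - p/w else (1 - w*p^k)*(1 - p^(k+1)/w)))"

lemma R_bound:
  fixes p w :: complex
  assumes p: "norm p < 1" and w: "w \<noteq> 0"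
  shows "norm ((if k = 0 then 1 - p/w else (1 - w*p^k)*(1 - p^(k+1)/w)) - 1) \<le> norm p ^ k * (norm w + 1/norm w + 1)"
proof (cases "k = 0")
  case True
  have h: "norm (p/w) \<le> 1 / norm w" using p w by (simp add: norm_divide divide_right_mono)
  have "norm ((if k = 0 then 1 - p/w else (1 - w*p^k)*(1 - p^(k+1)/w)) - 1) = norm (p/w)"
    using True by simp
  moreover have "norm p ^ k * (norm w + 1/norm w + 1) = norm w + 1/norm w + 1" using True by simp
  ultimately show ?thesis using h norm_ge_zero[of w] by linarith
next
  case False
  then show ?thesis using fac_bound[OF p w, of k] by simp
qed

lemma R_holo:
  fixes p :: complex
  assumes p: "norm p < 1"
  shows "R p holomorphic_on -{0}"
proof -
  have "(\<lambda>w. \<Prod>k. (if k = 0 then 1 - p/w else (1 - w*p^k)*(1 - p^(k+1)/w))) holomorphic_on -{0}"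
  proof (rule prodinf_holo_E[OF p R_bound[OF p]])
    show "(\<lambda>w. if k = 0 then 1 - p/w else (1 - w*p^k)*(1 - p^(k+1)/w)) holomorphic_on -{0}" for k
      by (cases "k = 0") (auto intro!: holomorphic_intros)
  qed
  moreover have "R p = (\<lambda>w. \<Prod>k. (if k = 0 then 1 - p/w else (1 - w*p^k)*(1 - p^(k+1)/w)))"
    by (rule ext) (simp add: R_def)
  ultimately show ?thesis by simp
qed

lemma R_summable:
  fixes p w :: complex
  assumes p: "norm p < 1" and w: "w \<noteq> 0"
  shows "summable (\<lambda>k. norm ((if k = 0 then 1 - p/w else (1 - w*p^k)*(1 - p^(k+1)/w)) - 1))"
proof (rule summable_comparison_test'[where g="\<lambda>k. norm p ^ k * (norm w + 1/norm w + 1)"])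
  show "summable (\<lambda>k. norm p ^ k * (norm w + 1/norm w + 1))"
    by (intro summable_mult2 summable_geometric) (use p in auto)
qed (use R_bound[OF p w] in auto)

lemma E_R:
  fixes p w :: complex
  assumes p: "norm p < 1" and w: "w \<noteq> 0"
  shows "E p w = (1 - w) * R p w"
proof -
  define r where "r k = (if k = 0 then 1 - p/w else (1 - w*p^k)*(1 - p^(k+1)/w))" for k
  define f where "f k = (1 - w*p^k)*(1 - p^(k+1)/w)" for k
  have eq: "(\<Prod>k<Suc N. f k) = (1 - w) * (\<Prod>k<Suc N. r k)" for N
    unfolding prod.lessThan_Suc_shift by (simp add: f_def r_def)
  have l1: "(\<lambda>N. \<Prod>k<Suc N. f k) \<longlonglongrightarrow> E p w"
    using LIMSEQ_Suc[OF E_lim[OF p w]] unfolding f_def .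
  have "(\<lambda>N. \<Prod>k<N. r k) \<longlonglongrightarrow> R p w"
    using abs_prod_lim(2)[OF R_summable[OF p w]] unfolding r_def R_def .
  then have l2: "(\<lambda>N. (1 - w) * (\<Prod>k<Suc N. r k)) \<longlonglongrightarrow> (1 - w) * R p w"
    by (intro tendsto_intros LIMSEQ_Suc)
  show ?thesis using LIMSEQ_unique[OF l1] l2 eq by simp
qed

lemma R_one:
  fixes p :: complex
  assumes p: "norm p < 1"
  shows "R p 1 \<noteq> 0"
proof -
  have c: "convergent_prod (\<lambda>k. (if k = 0 then 1 - p/1 else (1 - 1*p^k)*(1 - p^(k+1)/1)))"
    using abs_prod_lim(1)[OF R_summable[OF p, of 1]] by simp
  have pk: "p^k \<noteq> 1" if "k > 0" for k
  proof
    assume "p^k = 1"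
    then have "norm p ^ k = 1" by (metis norm_one norm_power)
    moreover have "norm p ^ k < 1" using p that by (simp add: power_less_one_iff)
    ultimately show False by simp
  qed
  have "(if k = 0 then 1 - p/1 else (1 - 1*p^k)*(1 - p^(k+1)/1)) \<noteq> 0" for k
  proof (cases "k = 0")
    case True
    have "p \<noteq> 1" using p by auto
    then show ?thesis using True by simp
  next
    case False
    then show ?thesis using pk[of k] pk[of "k+1"] by (auto simp del: power_Suc)
  qed
  from prodinf_nonzero[OF c this] show ?thesis unfolding R_def by simp
qed

lemma E_mult:
  fixes p :: complex and m :: int
  assumes p: "norm p < 1" "p \<noteq> 0"
  shows "\<exists>c. c holomorphic_on -{0} \<and> (\<forall>z. z \<noteq> 0 \<longrightarrow> c z \<noteq> 0 \<and> E p (p powi m * z) = c z * E p z)"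
proof (induction m rule: int_induct[where k=0])
  case base
  show ?case by (rule exI[of _ "\<lambda>z. 1"]) auto
next
  case (step1 i)
  then obtain c where c: "c holomorphic_on -{0}" "\<And>z. z \<noteq> 0 \<Longrightarrow> c z \<noteq> 0 \<and> E p (p powi i * z) = c z * E p z"
    by blast
  define c' where "c' z = - c z / (p powi i * z)" for z
  have "c' holomorphic_on -{0}" unfolding c'_def using p(2)
    by (intro holomorphic_intros c) auto
  moreover have "c' z \<noteq> 0 \<and> E p (p powi (i+1) * z) = c' z * E p z" if z: "z \<noteq> 0" for z
  proof -
    have y: "p powi i * z \<noteq> 0" using p(2) z by simp
    have "p powi (i+1) * z = p * (p powi i * z)" using p(2) by (simp add: power_int_add_1')
    then have "E p (p powi (i+1) * z) = - E p (p powi i * z) / (p powi i * z)"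
      using E_shift[OF p y] y by (simp add: field_simps)
    also have "\<dots> = c' z * E p z" using c(2)[OF z] by (simp add: c'_def)
    finally show ?thesis using c(2)[OF z] y by (simp add: c'_def)
  qed
  ultimately show ?case by blast
next
  case (step2 i)
  then obtain c where c: "c holomorphic_on -{0}" "\<And>z. z \<noteq> 0 \<Longrightarrow> c z \<noteq> 0 \<and> E p (p powi i * z) = c z * E p z"
    by blast
  define c' where "c' z = - (p powi (i-1) * z) * c z" for z
  have "c' holomorphic_on -{0}" unfolding c'_def using p(2)
    by (intro holomorphic_intros c)
  moreover have "c' z \<noteq> 0 \<and> E p (p powi (i-1) * z) = c' z * E p z" if z: "z \<noteq> 0" for z
  proof -
    have y: "p powi (i-1) * z \<noteq> 0" using p(2) z by simp
    have key: "p * (p powi (i-1) * z) = p powi i * z"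
      using p(2) power_int_add_1'[of p "i-1"] by (simp add: mult.assoc)
    have h: "E p (p powi i * z) * (p powi (i-1) * z) = - E p (p powi (i-1) * z)"
      using E_shift[OF p y] unfolding key .
    have "E p (p powi (i-1) * z) = - (E p (p powi i * z) * (p powi (i-1) * z))"
      using h by simp
    also have "\<dots> = - E p (p powi i * z) * (p powi (i-1) * z)" by simp
    also have "\<dots> = c' z * E p z" using c(2)[OF z] by (simp add: c'_def)
    finally show ?thesis using c(2)[OF z] y by (simp add: c'_def)
  qed
  ultimately show ?case by blast
qed

lemma E_local:
  fixes p w0 :: complex
  assumes p: "norm p < 1" "p \<noteq> 0" and w0: "w0 \<noteq> 0" and z: "E p w0 = 0"
  shows "\<exists>S. S holomorphic_on -{0} \<and> S w0 \<noteq> 0 \<and> (\<forall>w. w \<noteq> 0 \<longrightarrow> E p w = (w0 - w) * S w)"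
proof -
  obtain m where m: "w0 = p powi m" using E_zero[OF p w0 z] by blast
  obtain c where c: "c holomorphic_on -{0}" "\<And>z. z \<noteq> 0 \<Longrightarrow> c z \<noteq> 0 \<and> E p (p powi m * z) = c z * E p z"
    using E_mult[OF p, of m] by blast
  define S where "S w = c (w / w0) * R p (w / w0) / w0" for w
  have "S holomorphic_on -{0}" unfolding S_def
  proof (intro holomorphic_intros)
    show "(\<lambda>w. c (w / w0)) holomorphic_on -{0}"
      by (rule holo_comp[OF c(1)]) (use w0 in \<open>auto intro!: holomorphic_intros\<close>)
    show "(\<lambda>w. R p (w / w0)) holomorphic_on -{0}"
      by (rule holo_comp[OF R_holo[OF p(1)]]) (use w0 in \<open>auto intro!: holomorphic_intros\<close>)
  qed (use w0 in auto)
  moreover have "S w0 \<noteq> 0" using c(2)[of 1] R_one[OF p(1)] w0 by (simp add: S_def)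
  moreover have "E p w = (w0 - w) * S w" if w: "w \<noteq> 0" for w
  proof -
    have wz: "w / w0 \<noteq> 0" using w w0 by simp
    have "E p w = E p (p powi m * (w / w0))" using m w0 by simp
    also have "\<dots> = c (w/w0) * E p (w/w0)" using c(2)[OF wz] by simp
    also have "\<dots> = c (w/w0) * ((1 - w/w0) * R p (w/w0))" using E_R[OF p(1) wz] by simp
    also have "\<dots> = (w0 - w) * S w" using w0 by (simp add: S_def field_simps)
    finally show ?thesis .
  qed
  ultimately show ?thesis by blast
qed


lemma annulus:
  fixes p x :: complex
  assumes p: "norm p < 1" "p \<noteq> 0" and x: "x \<noteq> 0"
  shows "\<exists>k::int. norm p \<le> norm (p powi k * x) \<and> norm (p powi k * x) \<le> 1"
proof -
  define q where "q = norm p"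
  have q: "0 < q" "q < 1" using p by (auto simp: q_def)
  define L where "L = ln q"
  have L: "L < 0" using q by (simp add: L_def)
  define t where "t = ln (norm x)"
  define k where "k = \<lceil>-t/L\<rceil>"
  have k1: "-t/L \<le> k" unfolding k_def by (rule le_of_int_ceiling)
  have k2: "k < -t/L + 1" unfolding k_def by linarith
  have a1: "k * L \<le> (-t/L) * L" using mult_right_mono_neg[OF k1, of L] L by simp
  have a2: "(-t/L + 1) * L \<le> k * L" using mult_right_mono_neg[of k "-t/L + 1" L] k2 L by simp
  have e1: "(-t/L) * L = -t" using L by simp
  have e2: "(-t/L + 1) * L = -t + L" using L by (simp add: field_simps)
  have nrm: "norm (p powi k * x) = exp (k * L + t)"
  proof -
    have "norm (p powi k * x) = q powi k * norm x" by (simp add: norm_mult norm_power_int q_def)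
    also have "q powi k = q powr (real_of_int k)" using q by (simp add: powr_real_of_int')
    also have "\<dots> = exp (k * L)" using q by (simp add: powr_def L_def mult.commute)
    also have "norm x = exp t" using x by (simp add: t_def)
    finally show ?thesis by (simp add: exp_add)
  qed
  have "q = exp L" using q by (simp add: L_def)
  then have "norm p \<le> norm (p powi k * x)" unfolding nrm q_def using a2 e2 by simp
  moreover have "norm (p powi k * x) \<le> 1" unfolding nrm using a1 e1 by simp
  ultimately show ?thesis by blast
qed

lemma inv_shift1:
  fixes F :: "complex \<Rightarrow> complex" and p :: complex
  assumes p: "p \<noteq> 0" and sh: "\<And>w. w \<noteq> 0 \<Longrightarrow> F (p*w) * w^2 = F w"
  shows "x \<noteq> 0 \<Longrightarrow> F x = 0 \<Longrightarrow> F (p powi m * x) = 0"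
proof (induction m rule: int_induct[where k=0])
  case base
  then show ?case by simp
next
  case (step1 i)
  have y: "p powi i * x \<noteq> 0" using p step1 by simp
  have key: "p powi (i+1) * x = p * (p powi i * x)" using p by (simp add: power_int_add_1' mult.assoc)
  have "F (p * (p powi i * x)) * (p powi i * x)^2 = 0" using sh[OF y] step1 by simp
  then have "F (p * (p powi i * x)) = 0" using y p by simp
  then show ?case unfolding key .
next
  case (step2 i)
  have y: "p powi (i-1) * x \<noteq> 0" using p step2 by simp
  have key: "p * (p powi (i-1) * x) = p powi i * x"
    using p power_int_add_1'[of p "i-1"] by (simp add: mult.assoc)
  have "F (p powi (i-1) * x) = F (p * (p powi (i-1) * x)) * (p powi (i-1) * x)^2"
    using sh[OF y] by simp
  also have "\<dots> = 0" unfolding key using step2 by simp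
  finally show ?case .
qed

lemma inv_shift2:
  fixes F :: "complex \<Rightarrow> complex" and p :: complex
  assumes p: "p \<noteq> 0" and sh: "\<And>w. w \<noteq> 0 \<Longrightarrow> F (p*w) = F w"
  shows "x \<noteq> 0 \<Longrightarrow> F (p powi m * x) = F x"
proof (induction m rule: int_induct[where k=0])
  case base
  then show ?case by simp
next
  case (step1 i)
  have y: "p powi i * x \<noteq> 0" using p step1 by simp
  have key: "p powi (i+1) * x = p * (p powi i * x)" using p by (simp add: power_int_add_1' mult.assoc)
  have "F (p * (p powi i * x)) = F x" using sh[OF y] step1 by simp
  then show ?case unfolding key .
next
  case (step2 i)
  have y: "p powi (i-1) * x \<noteq> 0" using p step2 by simp
  have key: "p * (p powi (i-1) * x) = p powi i * x"
    using p power_int_add_1'[of p "i-1"] by (simp add: mult.assoc)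
  have "F (p powi (i-1) * x) = F (p * (p powi (i-1) * x))" using sh[OF y] by simp
  also have "\<dots> = F x" unfolding key using step2 by simp
  finally show ?case .
qed


lemma E_holo_comp:
  fixes p :: complex and g :: "complex \<Rightarrow> complex"
  assumes p: "norm p < 1" and "g holomorphic_on -{0}" "\<And>w. w \<noteq> 0 \<Longrightarrow> g w \<noteq> 0"
  shows "(\<lambda>w. E p (g w)) holomorphic_on -{0}"
  by (rule holo_comp[OF E_holo[OF p] assms(2,3)])

lemma E_shift':
  fixes p x :: complex
  assumes p: "norm p < 1" "p \<noteq> 0" and x: "x \<noteq> 0"
  shows "E p (p*x) = - E p x / x"
  using E_shift[OF p x] x by (simp add: field_simps)

lemma E_refl':
  fixes p x :: complex
  assumes p: "norm p < 1" and x: "x \<noteq> 0"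
  shows "E p (1/x) = - E p x / x"
  using E_refl[OF p x] x by (simp add: field_simps)

lemma addition_generic:
  fixes p y u v :: complex
  assumes p: "norm p < 1" "p \<noteq> 0" and nz: "y \<noteq> 0" "u \<noteq> 0" "v \<noteq> 0"
    and G1: "\<And>m::int. u^2 \<noteq> p powi m"
    and G2: "E p (v * u) \<noteq> 0" "E p (v/u) \<noteq> 0"
    and x: "x \<noteq> 0"
  shows "E p (x*y) * E p (x/y) * E p (u* v) * E p (u/v) - E p (x* v) * E p (x/v) * E p (u*y) * E p (u/y)
       = (u/y) * E p (y* v) * E p (y/v) * (E p (x*u) * E p (x/u))"
proof -
  define N where "N x = E p (x*y) * E p (x/y) * E p (u* v) * E p (u/v) - E p (x* v) * E p (x/v) * E p (u*y) * E p (u/y)" for x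
  define D where "D x = E p (x*u) * E p (x/u)" for x
  have Nholo: "N holomorphic_on -{0}" unfolding N_def
    by (intro holomorphic_intros E_holo_comp[OF p(1)]) (use nz in auto)
  have Dholo: "D holomorphic_on -{0}" unfolding D_def
    by (intro holomorphic_intros E_holo_comp[OF p(1)]) (use nz in auto)
  have Dsh: "D (p*w) * w^2 = D w" if w: "w \<noteq> 0" for w
  proof -
    have "D (p*w) = E p (p*(w*u)) * E p (p*(w/u))" by (simp add: D_def mult.assoc)
    also have "\<dots> = (- E p (w*u) / (w*u)) * (- E p (w/u) / (w/u))"
      using E_shift'[OF p, of "w*u"] E_shift'[OF p, of "w/u"] w nz by simp
    finally show ?thesis using w nz by (simp add: D_def field_simps power2_eq_square)
  qed
  have Nsh: "N (p*w) * w^2 = N w" if w: "w \<noteq> 0" for w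
  proof -
    have a: "E p (p*w*y) * E p (p*w/y) = E p (w*y) * E p (w/y) / w^2"
    proof -
      have "E p (p*w*y) * E p (p*w/y) = E p (p*(w*y)) * E p (p*(w/y))" by (simp add: mult.assoc)
      also have "\<dots> = (- E p (w*y) / (w*y)) * (- E p (w/y) / (w/y))"
        using E_shift'[OF p, of "w*y"] E_shift'[OF p, of "w/y"] w nz by simp
      finally show ?thesis using w nz by (simp add: field_simps power2_eq_square)
    qed
    have b: "E p (p*w* v) * E p (p*w/v) = E p (w* v) * E p (w/v) / w^2"
    proof -
      have "E p (p*w* v) * E p (p*w/v) = E p (p*(w* v)) * E p (p*(w/v))" by (simp add: mult.assoc)
      also have "\<dots> = (- E p (w* v) / (w* v)) * (- E p (w/v) / (w/v))"
        using E_shift'[OF p, of "w* v"] E_shift'[OF p, of "w/v"] w nz by simp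
      finally show ?thesis using w nz by (simp add: field_simps power2_eq_square)
    qed
    have "N (p*w) = (E p (p*w*y) * E p (p*w/y)) * E p (u* v) * E p (u/v) - (E p (p*w* v) * E p (p*w/v)) * E p (u*y) * E p (u/y)"
      by (simp add: N_def mult.assoc)
    also have "\<dots> = N w / w^2" unfolding a b N_def using w by (simp add: field_simps)
    finally show ?thesis using w by simp
  qed
  have Nu: "N u = 0" by (simp add: N_def mult_ac)
  have Nu': "N (1/u) = 0"
  proof -
    have a: "E p ((1/u)*z) * E p ((1/u)/z) = E p (u*z) * E p (u/z) / u^2" if z: "z \<noteq> 0" for z
    proof -
      have "E p ((1/u)*z) * E p ((1/u)/z) = E p (1/(u/z)) * E p (1/(u*z))" by simp
      also have "\<dots> = (- E p (u/z) / (u/z)) * (- E p (u*z) / (u*z))"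
        using E_refl'[OF p(1), of "u/z"] E_refl'[OF p(1), of "u*z"] z nz by simp
      finally show ?thesis using z nz by (simp add: field_simps power2_eq_square)
    qed
    show ?thesis unfolding N_def a[OF nz(1)] a[OF nz(3)] by (simp add: field_simps)
  qed
  have Nzero: "N x0 = 0" if x0: "x0 \<noteq> 0" "D x0 = 0" for x0
  proof -
    have "E p (x0*u) = 0 \<or> E p (x0/u) = 0" using x0 by (simp add: D_def)
    then show ?thesis
    proof
      assume "E p (x0*u) = 0"
      then obtain m where m: "x0*u = p powi m" using E_zero[OF p, of "x0*u"] x0 nz by auto
      have "x0 = p powi m * (1/u)" using m nz by (simp add: field_simps)
      then show ?thesis using inv_shift1[OF p(2) Nsh, of "1/u" m] Nu' nz by simp
    next
      assume "E p (x0/u) = 0"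
      then obtain m where m: "x0/u = p powi m" using E_zero[OF p, of "x0/u"] x0 nz by auto
      have "x0 = p powi m * u" using m nz by (simp add: field_simps)
      then show ?thesis using inv_shift1[OF p(2) Nsh, of u m] Nu nz by simp
    qed
  qed
  have notboth: "False" if h: "E p (x0*u) = 0" "E p (x0/u) = 0" "x0 \<noteq> 0" for x0
  proof -
    obtain j where j: "x0*u = p powi j" using E_zero[OF p, of "x0*u"] h nz by auto
    obtain m where m: "x0/u = p powi m" using E_zero[OF p, of "x0/u"] h nz by auto
    have "u^2 = (x0*u) / (x0/u)" using h nz by (simp add: field_simps power2_eq_square)
    also have "\<dots> = p powi (j - m)" unfolding j m using p(2) by (simp add: power_int_diff)
    finally show False using G1 by blast
  qed
  have Dlocal: "\<exists>T. T holomorphic_on -{0} \<and> T x0 \<noteq> 0 \<and> (\<forall>x. x \<noteq> 0 \<longrightarrow> D x = (x0 - x) * T x)"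
    if x0: "x0 \<noteq> 0" "D x0 = 0" for x0
  proof -
    have "E p (x0*u) = 0 \<or> E p (x0/u) = 0" using x0 by (simp add: D_def)
    then show ?thesis
    proof
      assume z: "E p (x0*u) = 0"
      have nz2: "E p (x0/u) \<noteq> 0" using notboth[OF z _ x0(1)] by blast
      obtain S where S: "S holomorphic_on -{0}" "S (x0*u) \<noteq> 0" "\<And>w. w \<noteq> 0 \<Longrightarrow> E p w = (x0*u - w) * S w"
        using E_local[OF p _ z] x0 nz by auto
      define T where "T x = u * S (x*u) * E p (x/u)" for x
      have "T holomorphic_on -{0}" unfolding T_def
        by (intro holomorphic_intros E_holo_comp[OF p(1)] holo_comp[OF S(1)]) (use nz in auto)
      moreover have "T x0 \<noteq> 0" using S(2) nz2 nz by (simp add: T_def)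
      moreover have "D x = (x0 - x) * T x" if xx: "x \<noteq> 0" for x
      proof -
        have f: "x0*u - x*u = (x0 - x)*u" by (simp add: left_diff_distrib)
        have e: "E p (x*u) = (x0 - x) * u * S (x*u)" using S(3)[of "x*u"] xx nz unfolding f by simp
        show ?thesis unfolding D_def T_def e by (simp only: mult_ac)
      qed
      ultimately show ?thesis by blast
    next
      assume z: "E p (x0/u) = 0"
      have nz2: "E p (x0*u) \<noteq> 0" using notboth[OF _ z x0(1)] by blast
      obtain S where S: "S holomorphic_on -{0}" "S (x0/u) \<noteq> 0" "\<And>w. w \<noteq> 0 \<Longrightarrow> E p w = (x0/u - w) * S w"
        using E_local[OF p _ z] x0 nz by auto
      define T where "T x = S (x/u) * E p (x*u) / u" for x
      have "T holomorphic_on -{0}" unfolding T_def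
        by (intro holomorphic_intros E_holo_comp[OF p(1)] holo_comp[OF S(1)]) (use nz in auto)
      moreover have "T x0 \<noteq> 0" using S(2) nz2 nz by (simp add: T_def)
      moreover have "D x = (x0 - x) * T x" if xx: "x \<noteq> 0" for x
      proof -
        have f: "x0/u - x/u = (x0 - x)/u" by (simp add: diff_divide_distrib)
        have e: "E p (x/u) = (x0 - x) / u * S (x/u)" using S(3)[of "x/u"] xx nz unfolding f by simp
        show ?thesis unfolding D_def T_def e by (simp add: mult_ac)
      qed
      ultimately show ?thesis by blast
    qed
  qed
  define r where "r x = N x / D x" for x
  have rsh: "r (p*w) = r w" if w: "w \<noteq> 0" for w
  proof -
    have a: "N (p*w) = N w / w^2" using Nsh[OF w] w by (simp add: field_simps)
    have b: "D (p*w) = D w / w^2" using Dsh[OF w] w by (simp add: field_simps)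
    show ?thesis unfolding r_def a b using w by simp
  qed
  define g where "g x = (if D x \<noteq> 0 then r x else Lim (at x) r)" for x
  have loc: "\<exists>e>0. ball x0 e \<subseteq> -{0} \<and> g holomorphic_on ball x0 e \<and> (\<forall>x\<in>ball x0 e. x \<noteq> x0 \<longrightarrow> D x \<noteq> 0)"
    if x0: "x0 \<noteq> 0" for x0
  proof (cases "D x0 = 0")
    case False
    have "open (-{0} \<inter> D -` (-{0}))"
      by (rule continuous_open_preimage) (use Dholo holomorphic_on_imp_continuous_on in auto)
    moreover have "x0 \<in> -{0} \<inter> D -` (-{0})" using x0 False by auto
    ultimately obtain e where e: "e > 0" "ball x0 e \<subseteq> -{0} \<inter> D -` (-{0})"
      using openE by blast
    have sub: "ball x0 e \<subseteq> -{0}" using e by auto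
    have Dn: "D x \<noteq> 0" if "x \<in> ball x0 e" for x using e that by auto
    have "r holomorphic_on ball x0 e" unfolding r_def
      by (intro holomorphic_intros holomorphic_on_subset[OF Nholo sub] holomorphic_on_subset[OF Dholo sub] Dn)
    then have "g holomorphic_on ball x0 e"
      by (rule holomorphic_transform) (simp add: g_def Dn)
    then show ?thesis using e(1) sub Dn by blast
  next
    case True
    obtain T where T: "T holomorphic_on -{0}" "T x0 \<noteq> 0" "\<And>x. x \<noteq> 0 \<Longrightarrow> D x = (x0 - x) * T x"
      using Dlocal[OF x0 True] by blast
    have N0: "N x0 = 0" using Nzero[OF x0 True] .
    define M where "M = (\<lambda>z. if z = x0 then deriv N x0 else (N z - N x0)/(z - x0))"
    have Mholo: "M holomorphic_on -{0}" unfolding M_def by (rule pole_lemma_open[OF Nholo]) auto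
    have "open (-{0} \<inter> T -` (-{0}))"
      by (rule continuous_open_preimage) (use T(1) holomorphic_on_imp_continuous_on in auto)
    moreover have "x0 \<in> -{0} \<inter> T -` (-{0})" using x0 T(2) by auto
    ultimately obtain e where e: "e > 0" "ball x0 e \<subseteq> -{0} \<inter> T -` (-{0})"
      using openE by blast
    have sub: "ball x0 e \<subseteq> -{0}" using e by auto
    have Tn: "T x \<noteq> 0" if "x \<in> ball x0 e" for x using e that by auto
    define h where "h z = - M z / T z" for z
    have hholo: "h holomorphic_on ball x0 e" unfolding h_def
      by (intro holomorphic_intros holomorphic_on_subset[OF Mholo sub] holomorphic_on_subset[OF T(1) sub] Tn)
    have Dn: "D x \<noteq> 0" if xx: "x \<in> ball x0 e" "x \<noteq> x0" for x
    proof -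
      have "x \<in> -{0}" using sub xx(1) by blast
      then have "x \<noteq> 0" by simp
      then show ?thesis using T(3)[of x] Tn[OF xx(1)] xx(2) by simp
    qed
    have rh: "r x = h x" if "x \<in> ball x0 e" "x \<noteq> x0" for x
    proof -
      have xn: "x \<noteq> 0" using sub that by auto
      have n: "N x = (x - x0) * M x" using that N0 by (simp add: M_def)
      have d: "D x = (x0 - x) * T x" using T(3)[OF xn] .
      have ne: "x0 - x \<noteq> 0" using that(2) by simp
      have "r x = ((x - x0) * M x) / ((x0 - x) * T x)" unfolding r_def n d ..
      also have "x - x0 = - (x0 - x)" by simp
      also have "- (x0 - x) * M x / ((x0 - x) * T x) = - M x / T x"
        using ne Tn[OF that(1)] by (simp add: field_simps)
      finally show ?thesis by (simp add: h_def)
    qed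
    have "continuous_on (ball x0 e) h" using hholo by (rule holomorphic_on_imp_continuous_on)
    then have "isCont h x0" using continuous_on_eq_continuous_at[of "ball x0 e" h] e(1) by simp
    then have "(h \<longlongrightarrow> h x0) (at x0)" by (simp add: isCont_def)
    moreover have "eventually (\<lambda>x. r x = h x) (at x0)"
    proof -
      have "eventually (\<lambda>x. x \<in> ball x0 e - {x0}) (at x0)"
        by (rule eventually_at_in_open) (use e(1) in auto)
      then show ?thesis by eventually_elim (use rh in auto)
    qed
    ultimately have "(r \<longlongrightarrow> h x0) (at x0)" using tendsto_cong by fastforce
    then have "Lim (at x0) r = h x0" by (intro tendsto_Lim) auto
    then have "g x = h x" if "x \<in> ball x0 e" for x
      using that True rh Dn by (cases "x = x0") (auto simp: g_def)
    then have "g holomorphic_on ball x0 e"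
      using holomorphic_transform[OF hholo] by metis
    then show ?thesis using e(1) sub Dn by blast
  qed
  have gholo: "g holomorphic_on -{0}"
  proof -
    have "g analytic_on -{0}" unfolding analytic_on_def
    proof
      fix x0 :: complex assume "x0 \<in> -{0}"
      then obtain e where "e > 0" "g holomorphic_on ball x0 e" using loc by auto
      then show "\<exists>e>0. g holomorphic_on ball x0 e" by blast
    qed
    moreover have "open (-{0::complex})" by auto
    ultimately show ?thesis using analytic_on_open by blast
  qed
  have gcont: "isCont g x0" if "x0 \<noteq> 0" for x0
  proof -
    have "continuous_on (-{0}) g" using gholo by (rule holomorphic_on_imp_continuous_on)
    moreover have "open (-{0::complex})" by auto
    ultimately show ?thesis using continuous_on_eq_continuous_at[of "-{0}" g] that by simp
  qed
  define A where "A = cball 0 1 - ball (0::complex) (norm p)"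
  have cA: "compact A" unfolding A_def by (intro compact_diff) auto
  have A0: "A \<subseteq> -{0}" using p(2) by (auto simp: A_def)
  have "continuous_on A g" using gholo A0 holomorphic_on_imp_continuous_on holomorphic_on_subset by blast
  then have "bounded (g ` A)" using cA compact_continuous_image compact_imp_bounded by blast
  then obtain B where B: "\<And>x. x \<in> A \<Longrightarrow> norm (g x) \<le> B" unfolding bounded_iff by blast
  have bndD: "norm (g x) \<le> B" if x: "x \<noteq> 0" "D x \<noteq> 0" for x
  proof -
    obtain k where k: "norm p \<le> norm (p powi k * x)" "norm (p powi k * x) \<le> 1"
      using annulus[OF p x(1)] by blast
    define xq where "xq = p powi k * x"
    have xqA: "xq \<in> A" using k unfolding A_def xq_def by auto
    have xqn: "xq \<noteq> 0" using x p(2) by (simp add: xq_def)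
    have xback: "p powi (-k) * xq = x"
    proof -
      have "p powi (-k) * p powi k = 1" using p(2) by (simp add: power_int_minus)
      then show ?thesis by (simp add: xq_def mult.assoc[symmetric])
    qed
    have Dxq: "D xq \<noteq> 0"
    proof
      assume "D xq = 0"
      then have "D (p powi (-k) * xq) = 0" using inv_shift1[of p D xq "-k", OF p(2) Dsh xqn] by blast
      then show False using x xback by simp
    qed
    have "g x = r x" using x by (simp add: g_def)
    also have "r x = r xq" unfolding xq_def using inv_shift2[of p r x k, OF p(2) rsh x(1)] by simp
    also have "r xq = g xq" using Dxq by (simp add: g_def)
    finally show ?thesis using B[OF xqA] by simp
  qed
  have bnd: "norm (g x) \<le> B" if x: "x \<noteq> 0" for x
  proof (cases "D x = 0")
    case False
    then show ?thesis using bndD x by blast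
  next
    case True
    obtain e where e: "e > 0" "ball x e \<subseteq> -{0}" "\<forall>z\<in>ball x e. z \<noteq> x \<longrightarrow> D z \<noteq> 0"
      using loc[OF x] by blast
    have "(g \<longlongrightarrow> g x) (at x)" using gcont[OF x] by (simp add: isCont_def)
    moreover have "eventually (\<lambda>z. norm (g z) \<le> B) (at x)"
    proof -
      have "eventually (\<lambda>z. z \<in> ball x e - {x}) (at x)"
        by (rule eventually_at_in_open) (use e(1) in auto)
      then show ?thesis
      proof eventually_elim
        case (elim z)
        then have "z \<noteq> 0" "D z \<noteq> 0" using e by auto
        then show ?case by (rule bndD)
      qed
    qed
    ultimately show ?thesis by (intro Lim_norm_ubound[of "at x" g]) auto
  qed
  have "(g \<circ> exp) holomorphic_on UNIV"
    by (rule holomorphic_on_compose_gen[OF _ gholo]) (auto intro: holomorphic_intros)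
  moreover have "bounded (range (g \<circ> exp))"
    unfolding bounded_iff by (rule exI[of _ B]) (auto intro: bnd)
  ultimately have "(g \<circ> exp) constant_on UNIV" by (rule Liouville_theorem)
  then obtain c where c: "\<And>z. g (exp z) = c" unfolding constant_on_def by auto
  have gc: "g z = c" if "z \<noteq> 0" for z using c[of "Ln z"] that by simp
  have Dv: "D v \<noteq> 0" using G2 by (simp add: D_def)
  have NK: "N z = (N v / D v) * D z" if z: "z \<noteq> 0" for z
  proof (cases "D z = 0")
    case True
    then show ?thesis using Nzero[OF z] by simp
  next
    case False
    have "r z = r v" using gc[OF z] gc[OF nz(3)] False Dv by (simp add: g_def)
    then show ?thesis using False Dv by (simp add: r_def field_simps)
  qed
  have K: "N v / D v = (u/y) * E p (y * v) * E p (y/v)"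
  proof -
    have e1: "E p (v/y) = - E p (y/v) * (v/y)"
      using E_refl'[OF p(1), of "y/v"] nz by simp
    have e2: "E p (u/v) = - E p (v/u) * (u/v)"
      using E_refl'[OF p(1), of "v/u"] nz by simp
    have e3: "E p (v/v) = 0" using E_one[OF p(1)] nz by simp
    have c1: "v * y = y * v" "u * v = v * u" by (simp_all add: mult.commute)
    have "N v = E p (y * v) * E p (y/v) * (E p (v * u) * E p (v/u)) * ((v/y)*(u/v))"
      unfolding N_def e1 e2 e3 c1 by (simp add: mult_ac)
    also have "(v/y)*(u/v) = u/y" using nz by simp
    finally have "N v = (u/y) * E p (y * v) * E p (y/v) * D v" by (simp add: D_def mult_ac)
    then show ?thesis using Dv by simp
  qed
  show ?thesis using NK[OF x] unfolding K by (simp add: N_def D_def)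
qed


lemma E_p0:
  fixes z :: complex
  shows "E 0 z = 1 - z"
proof -
  have "(\<lambda>k. (1 - z * 0 ^ k) * (1 - 0 ^ (k + 1) / z)) = (\<lambda>k. if k = 0 then 1 - z else (1::complex))"
    by (rule ext) auto
  moreover have "(\<lambda>k. if k = 0 then 1 - z else (1::complex)) has_prod (1 - z)"
    using has_prod_single[of 0 "\<lambda>_. 1 - z"] by simp
  ultimately show ?thesis unfolding E_def using has_prod_unique by metis
qed

lemma addition_all:
  fixes p x y u v :: complex
  assumes p: "norm p < 1" and nz: "x \<noteq> 0" "y \<noteq> 0" "u \<noteq> 0" "v \<noteq> 0"
  shows "E p (x*y) * E p (x/y) * E p (u * v) * E p (u/v) - E p (x * v) * E p (x/v) * E p (u*y) * E p (u/y)
       = (u/y) * E p (y * v) * E p (y/v) * (E p (x*u) * E p (x/u))"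
proof (cases "p = 0")
  case True
  show ?thesis unfolding True E_p0 using nz by (simp add: field_simps)
next
  case False
  define F where "F u = E p (x*y) * E p (x/y) * E p (u * v) * E p (u/v) - E p (x * v) * E p (x/v) * E p (u*y) * E p (u/y)
       - (u/y) * E p (y * v) * E p (y/v) * (E p (x*u) * E p (x/u))" for u
  have Fholo: "F holomorphic_on -{0}" unfolding F_def
    by (intro holomorphic_intros E_holo_comp[OF p]) (use nz in auto)
  have Fcont: "isCont F u0" if "u0 \<noteq> 0" for u0
  proof -
    have "continuous_on (-{0}) F" using Fholo by (rule holomorphic_on_imp_continuous_on)
    moreover have "open (-{0::complex})" by auto
    ultimately show ?thesis using continuous_on_eq_continuous_at[of "-{0}" F] that by simp
  qed
  define Bd where "Bd = range (\<lambda>m::int. csqrt (p powi m)) \<union> range (\<lambda>m::int. - csqrt (p powi m))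
      \<union> range (\<lambda>m::int. p powi m / v) \<union> range (\<lambda>m::int. v / p powi m)"
  have cB: "countable Bd" unfolding Bd_def by auto
  have good: "F w = 0" if w: "w \<noteq> 0" "w \<notin> Bd" for w
  proof -
    have G1: "w^2 \<noteq> p powi m" for m :: int
    proof
      assume "w^2 = p powi m"
      then have "w^2 = (csqrt (p powi m))^2" by simp
      then have "w = csqrt (p powi m) \<or> w = - csqrt (p powi m)" by (rule power2_eq_iff[THEN iffD1])
      then show False using w(2) unfolding Bd_def by auto
    qed
    have G2a: "E p (v * w) \<noteq> 0"
    proof
      assume "E p (v * w) = 0"
      then obtain m where "v * w = p powi m" using E_zero[OF p False, of "v * w"] w nz by auto
      then have "w = p powi m / v" using nz by (simp add: field_simps)
      then show False using w(2) unfolding Bd_def by auto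
    qed
    have G2b: "E p (v/w) \<noteq> 0"
    proof
      assume "E p (v/w) = 0"
      then obtain m where m: "v/w = p powi m" using E_zero[OF p False, of "v/w"] w nz by auto
      have "p powi m \<noteq> 0" using False by simp
      then have "w = v / p powi m" using m nz w by (simp add: field_simps)
      then show False using w(2) unfolding Bd_def by auto
    qed
    show ?thesis unfolding F_def
      using addition_generic[OF p False nz(2) w(1) nz(4) G1 G2a G2b nz(1)] by simp
  qed
  have "F u = 0"
  proof (rule ccontr)
    assume Fu: "F u \<noteq> 0"
    obtain e where e: "e > 0" "\<And>z. dist u z < e \<Longrightarrow> F z \<noteq> 0"
      using continuous_at_avoid[OF Fcont[OF nz(3)] Fu] by blast
    define e' where "e' = min e (norm u)"
    have e': "e' > 0" using e nz by (simp add: e'_def)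
    have "uncountable (ball u e')" by (rule uncountable_ball[OF e'])
    then have "\<not> ball u e' \<subseteq> Bd" using cB countable_subset by blast
    then obtain z where z: "z \<in> ball u e'" "z \<notin> Bd" by blast
    have "dist u z < norm u" using z(1) by (simp add: e'_def)
    then have "z \<noteq> 0" by auto
    then have "F z = 0" using good z(2) by blast
    moreover have "F z \<noteq> 0" using e(2) z(1) by (simp add: e'_def)
    ultimately show False by simp
  qed
  then show ?thesis unfolding F_def by simp
qed

lemma telescope:
  fixes A B :: "nat \<Rightarrow> complex"
  shows "(\<Sum>k=0..n. (A k - B k) * (\<Prod>j=0..<k. A j) * (\<Prod>j\<in>{k<..n}. B j))
       = (\<Prod>j=0..n. A j) - (\<Prod>j=0..n. B j)"
proof (induction n)
  case 0
  then show ?case by simp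
next
  case (Suc n)
  have s: "(\<Prod>j\<in>{k<..Suc n}. B j) = B (Suc n) * (\<Prod>j\<in>{k<..n}. B j)" if "k \<le> n" for k
  proof -
    have "{k<..Suc n} = insert (Suc n) {k<..n}" using that by auto
    then show ?thesis by simp
  qed
  have "(\<Sum>k=0..Suc n. (A k - B k) * (\<Prod>j=0..<k. A j) * (\<Prod>j\<in>{k<..Suc n}. B j))
      = (\<Sum>k=0..n. (A k - B k) * (\<Prod>j=0..<k. A j) * (\<Prod>j\<in>{k<..Suc n}. B j))
        + (A (Suc n) - B (Suc n)) * (\<Prod>j=0..<Suc n. A j)"
    by simp
  also have "(\<Sum>k=0..n. (A k - B k) * (\<Prod>j=0..<k. A j) * (\<Prod>j\<in>{k<..Suc n}. B j))
      = B (Suc n) * (\<Sum>k=0..n. (A k - B k) * (\<Prod>j=0..<k. A j) * (\<Prod>j\<in>{k<..n}. B j))"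
    unfolding sum_distrib_left by (rule sum.cong) (auto simp: s mult_ac)
  also have "\<dots> = B (Suc n) * ((\<Prod>j=0..n. A j) - (\<Prod>j=0..n. B j))" using Suc.IH by simp
  also have "(\<Prod>j=0..<Suc n. A j) = (\<Prod>j=0..n. A j)" using atLeastLessThanSuc_atLeastAtMost by simp
  finally show ?case by (simp add: algebra_simps)
qed


theorem lemma3p1:
  fixes p :: complex and n :: nat and a b c d :: "nat \<Rightarrow> complex"
  assumes "norm p < 1"
    and "\<And>j. j \<le> n \<Longrightarrow> a j \<noteq> 0 \<and> b j \<noteq> 0 \<and> c j \<noteq> 0 \<and> d j \<noteq> 0"
  shows "(\<Sum>k=0..n. b k / c k * E p (a k * b k) * E p (a k / b k) * E p (c k * d k) * E p (c k / d k)
            * (\<Prod>j=0..<k. E p (a j * c j) * E p (a j / c j) * E p (b j * d j) * E p (b j / d j))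
            * (\<Prod>j\<in>{k<..n}. E p (a j * d j) * E p (a j / d j) * E p (b j * c j) * E p (b j / c j)))
         = (\<Prod>j=0..n. E p (a j * c j) * E p (a j / c j) * E p (b j * d j) * E p (b j / d j))
         - (\<Prod>j=0..n. E p (a j * d j) * E p (a j / d j) * E p (b j * c j) * E p (b j / c j))"
proof -
  define A where "A j = E p (a j * c j) * E p (a j / c j) * E p (b j * d j) * E p (b j / d j)" for j
  define B where "B j = E p (a j * d j) * E p (a j / d j) * E p (b j * c j) * E p (b j / c j)" for j
  have key: "b k / c k * E p (a k * b k) * E p (a k / b k) * E p (c k * d k) * E p (c k / d k) = A k - B k"
    if "k \<le> n" for k
  proof -
    have nz: "a k \<noteq> 0" "b k \<noteq> 0" "c k \<noteq> 0" "d k \<noteq> 0" using assms(2)[OF that] by auto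
    show ?thesis using addition_all[OF assms(1) nz(1) nz(3) nz(2) nz(4)]
      unfolding A_def B_def by (simp add: mult_ac)
  qed
  have "(\<Sum>k=0..n. b k / c k * E p (a k * b k) * E p (a k / b k) * E p (c k * d k) * E p (c k / d k)
            * (\<Prod>j=0..<k. E p (a j * c j) * E p (a j / c j) * E p (b j * d j) * E p (b j / d j))
            * (\<Prod>j\<in>{k<..n}. E p (a j * d j) * E p (a j / d j) * E p (b j * c j) * E p (b j / c j)))
      = (\<Sum>k=0..n. (A k - B k) * (\<Prod>j=0..<k. A j) * (\<Prod>j\<in>{k<..n}. B j))"
  proof (rule sum.cong[OF refl])
    fix k assume "k \<in> {0..n}"
    then have kn: "k \<le> n" by simp
    show "b k / c k * E p (a k * b k) * E p (a k / b k) * E p (c k * d k) * E p (c k / d k)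
            * (\<Prod>j=0..<k. E p (a j * c j) * E p (a j / c j) * E p (b j * d j) * E p (b j / d j))
            * (\<Prod>j\<in>{k<..n}. E p (a j * d j) * E p (a j / d j) * E p (b j * c j) * E p (b j / c j))
          = (A k - B k) * (\<Prod>j=0..<k. A j) * (\<Prod>j\<in>{k<..n}. B j)"
      unfolding key[OF kn] by (simp only: A_def B_def)
  qed
  also have "\<dots> = (\<Prod>j=0..n. A j) - (\<Prod>j=0..n. B j)" by (rule telescope)
  finally show ?thesis unfolding A_def B_def .
qed

end
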